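(* Let $H$ be a $6\times 6$ complex Hadamard matrix. Then $H$ is equivalent to a member of the family $F_6^{(2)}$ if and only if $\eta_c(H)\neq 0$ or $\eta_r(H)\neq 0$.
   Context: A $d\times d$ complex Hadamard matrix has unimodular entries and pairwise orthogonal columns. Two complex Hadamard matrices $H_1,H_2$ are equivalent if $H_2=D_1P_1H_1P_2D_2$ with $D_1,D_2$ diagonal unitary and $P_1,P_2$ permutation matrices. The dephased form of $H$ is the unique matrix $D_1HD_2$ ($D_1,D_2$ diagonal unitary) whose first row and first column consist of $1$'s. Two distinct columns $C_A,C_B$ form an ER pair if $\overline{(C_A)_j}(C_B)_j\in\{1,-1\}$ for every $j$ (analogously for rows). $\eta_c(H)$ (resp. $\eta_r(H)$) is the maximal number of pairwise disjoint ER pairs of columns (resp. rows) of the dephased form of $H$. Let $F_6$ be the Fourier matrix $(F_6)_{j,k}=\omega^{jk}$, $\omega=e^{2\pi i/6}$, $j,k=0,\dots,5$. For $a,b\in\mathbb{R}$ let $R(a,b)$ be the real $6\times6$ matrix with $R(a,b)_{j,k}=a$ if $j$ is odd and $k\in\{1,4\}$, $R(a,b)_{j,k}=b$ if $j$ is odd and $k\in\{2,5\}$, and $R(a,b)_{j,k}=0$ otherwise. The family $F_6^{(2)}$ is the set of matrices $F_6\circ\exp(iR(a,b))$ and $F_6\circ\exp(iR(a,b)^t)$ for $a,b\in\mathbb{R}$, where $\circ$ is the entrywise product and $\exp$ is applied entrywise. *)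

theory Defs
  imports Complex_Main
begin

text \<open>A 6x6 complex matrix is represented as a function nat => nat => complex;
  only the entries with indices in {0..<6} are meaningful.\<close>

type_synonym cmat = "nat \<Rightarrow> nat \<Rightarrow> complex"

definition hadamard6 :: "cmat \<Rightarrow> bool" where
  "hadamard6 H \<longleftrightarrow>
     (\<forall>j<6. \<forall>k<6. cmod (H j k) = 1) \<and>
     (\<forall>k<6. \<forall>l<6. k \<noteq> l \<longrightarrow> (\<Sum>j<6. cnj (H j k) * H j l) = 0)"

definition equiv6 :: "cmat \<Rightarrow> cmat \<Rightarrow> bool" where
  "equiv6 H1 H2 \<longleftrightarrow>
     (\<exists>d1 d2 :: nat \<Rightarrow> complex. \<exists>p1 p2 :: nat \<Rightarrow> nat.
        (\<forall>j<6. cmod (d1 j) = 1) \<and> (\<forall>k<6. cmod (d2 k) = 1) \<and>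
        bij_betw p1 {..<6} {..<6} \<and> bij_betw p2 {..<6} {..<6} \<and>
        (\<forall>j<6. \<forall>k<6. H2 j k = d1 j * H1 (p1 j) (p2 k) * d2 k))"

definition dephased :: "cmat \<Rightarrow> cmat" where
  "dephased H = (THE M.
     (\<exists>d1 d2 :: nat \<Rightarrow> complex.
        (\<forall>j<6. cmod (d1 j) = 1) \<and> (\<forall>k<6. cmod (d2 k) = 1) \<and>
        (\<forall>j<6. \<forall>k<6. M j k = d1 j * H j k * d2 k)) \<and>
     (\<forall>k<6. M 0 k = 1) \<and> (\<forall>j<6. M j 0 = 1) \<and>
     (\<forall>j k. \<not> (j < 6 \<and> k < 6) \<longrightarrow> M j k = 0))"

definition ER_cols :: "cmat \<Rightarrow> nat \<Rightarrow> nat \<Rightarrow> bool" where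
  "ER_cols M a b \<longleftrightarrow> a < 6 \<and> b < 6 \<and> a \<noteq> b \<and>
     (\<forall>j<6. cnj (M j a) * M j b \<in> {1, -1})"

definition ER_rows :: "cmat \<Rightarrow> nat \<Rightarrow> nat \<Rightarrow> bool" where
  "ER_rows M a b \<longleftrightarrow> a < 6 \<and> b < 6 \<and> a \<noteq> b \<and>
     (\<forall>k<6. cnj (M a k) * M b k \<in> {1, -1})"

definition eta_c :: "cmat \<Rightarrow> nat" where
  "eta_c H = Max {card P | P. P \<subseteq> {{a, b} | a b. ER_cols (dephased H) a b} \<and> pairwise disjnt P}"

definition eta_r :: "cmat \<Rightarrow> nat" where
  "eta_r H = Max {card P | P. P \<subseteq> {{a, b} | a b. ER_rows (dephased H) a b} \<and> pairwise disjnt P}"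

definition omega6 :: complex where
  "omega6 = cis (2 * pi / 6)"

definition F6 :: cmat where
  "F6 j k = (if j < 6 \<and> k < 6 then omega6 ^ (j * k) else 0)"

definition Rmat :: "real \<Rightarrow> real \<Rightarrow> nat \<Rightarrow> nat \<Rightarrow> real" where
  "Rmat a b j k = (if j < 6 \<and> odd j \<and> k \<in> {1, 4} then a
                   else if j < 6 \<and> odd j \<and> k \<in> {2, 5} then b else 0)"

definition F6R :: "real \<Rightarrow> real \<Rightarrow> cmat" where
  "F6R a b j k = F6 j k * exp (\<i> * complex_of_real (Rmat a b j k))"

definition F6Rt :: "real \<Rightarrow> real \<Rightarrow> cmat" where
  "F6Rt a b j k = F6 j k * exp (\<i> * complex_of_real (Rmat a b k j))"

definition in_F6_2 :: "cmat \<Rightarrow> bool" where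
  "in_F6_2 M \<longleftrightarrow> (\<exists>a b. M = F6R a b \<or> M = F6Rt a b)"

end

theory Submission
  imports Defs "Jordan_Normal_Form.Determinant"
begin

lemma omega6_Complex: "omega6 = Complex (1/2) (sqrt 3 / 2)"
  by (simp add: omega6_def cis.ctr cos_60 sin_60 flip: divide_divide_eq_left)
lemma z3: "omega6 ^ 3 = -1"
  by (simp add: omega6_def DeMoivre)
lemma z6: "omega6 ^ 6 = 1"
proof -
  have "omega6 ^ 6 = (omega6^3)^2" by (simp flip: power_mult)
  thus ?thesis by (simp add: z3)
qed
lemma z2: "omega6 ^ 2 = Complex (-1/2) (sqrt 3 / 2)"
  by (simp add: omega6_Complex power2_eq_square complex_eq_iff)
lemma z4: "omega6 ^ 4 = Complex (-1/2) (- sqrt 3 / 2)"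
proof -
  have "omega6 ^ 4 = omega6^2 * omega6^2" by (simp flip: power_add)
  also have "... = Complex (-1/2) (- sqrt 3 / 2)" unfolding z2 by (simp add: complex_eq_iff)
  finally show ?thesis .
qed
lemma zmod: "cmod omega6 = 1" by (simp add: omega6_def)
lemma zcnj: "cnj omega6 = omega6 ^ 5"
proof -
  have "cnj omega6 * omega6 = 1" using zmod by (metis complex_norm_square mult.commute of_real_1 power_one)
  hence "cnj omega6 = cnj omega6 * omega6^6" by (simp add: z6)
  also have "... = (cnj omega6 * omega6) * omega6^5" by (simp add: mult.assoc flip: power_Suc)
  also have "... = omega6^5" using \<open>cnj omega6 * omega6 = 1\<close> by simp
  finally show ?thesis .
qed
lemma z246: "1 + omega6^2 + omega6^4 = 0"
  by (simp add: z2 z4 complex_eq_iff)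
lemma z24ne: "omega6^2 \<noteq> omega6^4"
  by (simp add: z2 z4 complex_eq_iff)
lemma zpow_red: "n \<ge> 6 \<Longrightarrow> omega6 ^ n = omega6 ^ (n - 6)"
proof -
  assume "n \<ge> 6"
  then have "omega6 ^ n = omega6^(n-6) * omega6^6" by (simp flip: power_add)
  thus ?thesis by (simp add: z6)
qed

lemma unit_t:
  assumes "cmod t = 1" "cmod (1 + t) = 1"
  shows "t = omega6^2 \<or> t = omega6^4"
proof -
  have a: "Re t ^ 2 + Im t ^ 2 = 1" using assms(1) cmod_power2[of t] by simp
  have b: "(1 + Re t) ^ 2 + Im t ^ 2 = 1" using assms(2) cmod_power2[of "1+t"] by simp
  have p: "Re t = -1/2" using a b by (simp add: power2_eq_square algebra_simps) 
  have "Im t ^ 2 = (sqrt 3 / 2)^2" using a p by (simp add: power2_eq_square)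
  hence "Im t = sqrt 3 / 2 \<or> Im t = - (sqrt 3 / 2)" using power2_eq_iff by blast
  thus ?thesis using p by (auto simp: z2 z4 complex_eq_iff)
qed

lemma three_unit:
  assumes "cmod x = 1" "cmod y = 1" "cmod w = 1" "x + y + w = 0"
  shows "(y = x*omega6^2 \<and> w = x*omega6^4) \<or> (y = x*omega6^4 \<and> w = x*omega6^2)"
proof -
  have x0: "x \<noteq> 0" using assms(1) by auto
  define t where "t = y / x"
  have yt: "y = x * t" using x0 by (simp add: t_def)
  have "cmod t = 1" using assms by (simp add: t_def norm_divide)
  moreover have "1 + t = - w / x" using assms(4) x0 by (simp add: t_def field_simps add_eq_0_iff)
  hence "cmod (1 + t) = 1" using assms by (simp add: norm_divide)
  ultimately have "t = omega6^2 \<or> t = omega6^4" by (rule unit_t)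
  moreover have "w = - x * (1 + t)" using assms(4) yt by (simp add: algebra_simps add_eq_0_iff) (metis add.commute add.left_commute add_eq_0_iff)
  moreover have "1 + omega6^2 = - (omega6^4)" "1 + omega6^4 = - (omega6^2)" by (simp_all add: z2 z4 complex_eq_iff)
  ultimately show ?thesis using yt by auto
qed

lemma sum6:
  assumes "distinct [s0,s1,s2,r0,r1,r2]" "set [s0,s1,s2,r0,r1,r2] = {..<6}"
  shows "(\<Sum>j<6. f j) = f s0 + f s1 + f s2 + f r0 + f r1 + f r2"
proof -
  have "(\<Sum>j<6. f j) = sum f (set [s0,s1,s2,r0,r1,r2])" using assms(2) by simp
  also have "... = sum_list (map f [s0,s1,s2,r0,r1,r2])" using assms(1) by (rule sum.distinct_set_conv_list)
  finally show ?thesis by (simp add: add.assoc)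
qed

lemma cnj_unit: "cmod x = 1 \<Longrightarrow> cnj x = 1 / x"
proof -
  assume a: "cmod x = 1"
  hence "x * cnj x = 1" by (metis complex_norm_square mult.commute of_real_1 power_one complex_mult_cnj)
  moreover have "x \<noteq> 0" using a by auto
  ultimately show ?thesis by (simp add: field_simps)
qed

lemma Qval:
  assumes "a \<in> {omega6^2, omega6^4}" "b \<in> {omega6^2, omega6^4}"
  shows "1 + cnj a * b + (cnj a)^2 * b^2 = (if a = b then 3 else 0)"
proof -
  define A where "A = Complex (-1/2) (sqrt 3 / 2)"
  define B where "B = Complex (-1/2) (- sqrt 3 / 2)"
  have ne: "A \<noteq> B" "B \<noteq> A" by (simp_all add: complex_eq_iff A_def B_def)
  have "1 + cnj A * A + (cnj A)^2 * A^2 = 3" "1 + cnj B * B + (cnj B)^2 * B^2 = 3"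
       "1 + cnj A * B + (cnj A)^2 * B^2 = 0" "1 + cnj B * A + (cnj B)^2 * A^2 = 0"
    by (simp_all add: A_def B_def complex_eq_iff power2_eq_square algebra_simps)
  moreover have "a = A \<or> a = B" "b = A \<or> b = B" using assms by (auto simp: z2 z4 A_def B_def)
  ultimately show ?thesis using ne by auto
qed

lemma no_three:
  assumes "cmod x1 = 1" "cmod x2 = 1" "cmod x3 = 1" "cmod y1 = 1" "cmod y2 = 1" "cmod y3 = 1"
    "cnj x1 * x2 + cnj y1 * y2 = 0" "cnj x1 * x3 + cnj y1 * y3 = 0" "cnj x2 * x3 + cnj y2 * y3 = 0"
  shows False
proof -
  have nz: "x1 \<noteq> 0" "x2 \<noteq> 0" "x3 \<noteq> 0" "y1 \<noteq> 0" "y2 \<noteq> 0" "y3 \<noteq> 0" using assms(1-6) by auto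
  have e1: "x2 * y1 = - x1 * y2" using assms(7) nz unfolding cnj_unit[OF assms(1)] cnj_unit[OF assms(4)]
    by (simp add: field_simps add_eq_0_iff)
  have e2: "x3 * y1 = - x1 * y3" using assms(8) nz unfolding cnj_unit[OF assms(1)] cnj_unit[OF assms(4)]
    by (simp add: field_simps add_eq_0_iff)
  have e3: "x3 * y2 = - x2 * y3" using assms(9) nz unfolding cnj_unit[OF assms(2)] cnj_unit[OF assms(5)]
    by (simp add: field_simps add_eq_0_iff)
  have "x3 * y2 * (x2 * y1) = (x3 * y1) * (x2 * y2)" by simp
  hence "- x2 * y3 * (- x1 * y2) = (- x1 * y3) * (x2 * y2)" using e1 e2 e3 by simp
  hence "2 * (x1 * x2 * y2 * y3) = 0" by (simp add: algebra_simps)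
  thus False using nz by simp
qed

definition colpat :: "cmat \<Rightarrow> nat \<Rightarrow> nat \<Rightarrow> nat \<Rightarrow> nat \<Rightarrow> nat \<Rightarrow> nat \<Rightarrow> nat \<Rightarrow> complex \<Rightarrow> complex \<Rightarrow> bool" where
 "colpat G s0 s1 s2 r0 r1 r2 w a b \<longleftrightarrow> G s1 w = G s0 w * a \<and> G s2 w = G s0 w * a^2 \<and>
     G r1 w = G r0 w * b \<and> G r2 w = G r0 w * b^2"

lemma pair_orth:
  assumes "colpat G s0 s1 s2 r0 r1 r2 w a b" "colpat G s0 s1 s2 r0 r1 r2 w' a' b'"
    "a \<in> {omega6^2, omega6^4}" "b \<in> {omega6^2, omega6^4}" "a' \<in> {omega6^2, omega6^4}" "b' \<in> {omega6^2, omega6^4}"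
    "cmod (G s0 w) = 1" "cmod (G s0 w') = 1" "cmod (G r0 w) = 1" "cmod (G r0 w') = 1"
    "cnj (G s0 w) * G s0 w' + cnj (G s1 w) * G s1 w' + cnj (G s2 w) * G s2 w' +
     cnj (G r0 w) * G r0 w' + cnj (G r1 w) * G r1 w' + cnj (G r2 w) * G r2 w' = 0"
  shows "(a = a' \<longleftrightarrow> b = b') \<and> (a = a' \<longrightarrow> cnj (G s0 w) * G s0 w' + cnj (G r0 w) * G r0 w' = 0)"
proof -
  let ?x = "G s0 w" and ?x' = "G s0 w'" and ?y = "G r0 w" and ?y' = "G r0 w'"
  have "cnj ?x * ?x' * (1 + cnj a * a' + (cnj a)^2 * a'^2) + cnj ?y * ?y' * (1 + cnj b * b' + (cnj b)^2 * b'^2) = 0"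
    using assms(11) assms(1,2) unfolding colpat_def by (simp add: algebra_simps)
  hence E: "cnj ?x * ?x' * (if a = a' then 3 else 0) + cnj ?y * ?y' * (if b = b' then 3 else 0) = 0"
    by (simp only: Qval assms(3-6))
  have nz: "cnj ?x * ?x' \<noteq> 0" "cnj ?y * ?y' \<noteq> 0" using assms(7-10) by auto
  show ?thesis
  proof (cases "a = a'")
    case True
    have "(cnj ?x * ?x' + cnj ?y * ?y') * 3 = cnj ?x * ?x' * 3 + cnj ?y * ?y' * 3" by (simp add: algebra_simps)
    show ?thesis
    proof (cases "b = b'")
      case True
      with E \<open>a = a'\<close> have "cnj ?x * ?x' * 3 + cnj ?y * ?y' * 3 = 0" by simp
      hence "(cnj ?x * ?x' + cnj ?y * ?y') * 3 = 0" by (simp only: distrib_right)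
      hence "cnj ?x * ?x' + cnj ?y * ?y' = 0" by (metis mult_eq_0_iff zero_neq_numeral)
      thus ?thesis using True \<open>a = a'\<close> by blast
    next
      case False thus ?thesis using E nz \<open>a = a'\<close> by auto
    qed
  next
    case False
    then show ?thesis using E nz by (cases "b = b'") auto
  qed
qed

lemma all6: "(\<forall>i<6::nat. P i) \<longleftrightarrow> P 0 \<and> P 1 \<and> P 2 \<and> P 3 \<and> P 4 \<and> P 5"
proof
  assume "P 0 \<and> P 1 \<and> P 2 \<and> P 3 \<and> P 4 \<and> P 5"
  moreover have "\<And>i::nat. i < 6 \<Longrightarrow> i = 0 \<or> i = 1 \<or> i = 2 \<or> i = 3 \<or> i = 4 \<or> i = 5" by arith
  ultimately show "\<forall>i<6::nat. P i" by blast
qed simp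

lemma equiv_from_bij:
  assumes "bij_betw f1 {..<6} {..<6}" "bij_betw f2 {..<6} {..<6}"
    "\<forall>i<6. cmod (u i) = 1" "\<forall>l<6. cmod (v l) = 1"
    "\<forall>i<6. \<forall>l<6. H (f1 i) (f2 l) = u i * M i l * v l"
  shows "equiv6 M H"
proof -
  define p1 where "p1 = inv_into {..<6} f1"
  define p2 where "p2 = inv_into {..<6} f2"
  have b1: "bij_betw p1 {..<6} {..<6}" "bij_betw p2 {..<6} {..<6}"
    using assms(1,2) by (simp_all add: p1_def p2_def bij_betw_inv_into)
  have r1: "\<And>j. j < 6 \<Longrightarrow> f1 (p1 j) = j" "\<And>j. j < 6 \<Longrightarrow> f2 (p2 j) = j"
    using assms(1,2) by (simp_all add: p1_def p2_def bij_betw_inv_into_right)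
  have l6: "\<And>j. j < 6 \<Longrightarrow> p1 j < 6" "\<And>j. j < 6 \<Longrightarrow> p2 j < 6"
    using b1 by (auto dest: bij_betwE)
  show ?thesis unfolding equiv6_def
  proof (intro exI conjI)
    show "\<forall>j<6. cmod (u (p1 j)) = 1" using assms(3) l6 by auto
    show "\<forall>k<6. cmod (v (p2 k)) = 1" using assms(4) l6 by auto
    show "\<forall>j<6. \<forall>k<6. H j k = u (p1 j) * M (p1 j) (p2 k) * v (p2 k)"
      using assms(5) l6 r1 by metis
  qed (use b1 in auto)
qed

lemma unit_exp: "cmod A = 1 \<Longrightarrow> exp (\<i> * complex_of_real (Arg A)) = A"
proof -
  assume a: "cmod A = 1"
  hence "A \<noteq> 0" by auto
  hence "cis (Arg A) = sgn A" by (rule cis_Arg)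
  also have "... = A" using a by (simp add: sgn_div_norm)
  finally show ?thesis by (simp add: cis_conv_exp)
qed

lemma assemble:
  assumes dq1: "distinct [s0,r0,s1,r1,s2,r2]" "set [s0,r0,s1,r1,s2,r2] = {..<6}"
    and dq2: "distinct [a,w1,w3,b,w2,w4]" "set [a,w1,w3,b,w2,w4] = {..<6}"
    and HG: "\<forall>j<6. \<forall>k<6. H j k = H j a * G j k" and Ha: "\<forall>j<6. cmod (H j a) = 1"
    and Ga: "\<forall>j<6. G j a = 1"
    and Gb: "G s0 b = c" "G s1 b = c" "G s2 b = c" "G r0 b = - c" "G r1 b = - c" "G r2 b = - c"
    and c1: "cmod c = 1"
    and cp: "colpat G s0 s1 s2 r0 r1 r2 w1 (omega6^2) (omega6^2)" "colpat G s0 s1 s2 r0 r1 r2 w2 (omega6^2) (omega6^2)"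
      "colpat G s0 s1 s2 r0 r1 r2 w3 (omega6^4) (omega6^4)" "colpat G s0 s1 s2 r0 r1 r2 w4 (omega6^4) (omega6^4)"
    and un: "cmod (G s0 w1) = 1" "cmod (G s0 w2) = 1" "cmod (G s0 w3) = 1" "cmod (G s0 w4) = 1"
      "cmod (G r0 w1) = 1" "cmod (G r0 w2) = 1" "cmod (G r0 w3) = 1" "cmod (G r0 w4) = 1"
    and rel: "cnj (G s0 w1) * G s0 w2 + cnj (G r0 w1) * G r0 w2 = 0"
      "cnj (G s0 w3) * G s0 w4 + cnj (G r0 w3) * G r0 w4 = 0"
  shows "\<exists>\<alpha> \<beta>. equiv6 (F6R \<alpha> \<beta>) H"
proof -
  define x1 where "x1 = G s0 w1"
  define x2 where "x2 = G s0 w2"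
  define x3 where "x3 = G s0 w3"
  define x4 where "x4 = G s0 w4"
  define y1 where "y1 = G r0 w1"
  define y2 where "y2 = G r0 w2"
  define y3 where "y3 = G r0 w3"
  define y4 where "y4 = G r0 w4"
  define z where "z = omega6"
  have z6': "z^6 = 1" and z3': "z^3 = -1" and zc: "cnj z * z = 1" using z6 z3 zmod
    by (simp_all add: z_def) (metis complex_norm_square mult.commute of_real_1 power_one complex_mult_cnj)
  have xc: "cnj x1 * x1 = 1" "cnj x2 * x2 = 1" "cnj x3 * x3 = 1" "cnj x4 * x4 = 1"
     "cnj y1 * y1 = 1" "cnj y2 * y2 = 1" "cnj y3 * y3 = 1" "cnj y4 * y4 = 1"
    using un unfolding x1_def x2_def x3_def x4_def y1_def y2_def y3_def y4_def
    by (metis complex_norm_square mult.commute of_real_1 power_one complex_mult_cnj)+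
  have z4e: "z^4 = z^3 * z" "z^5 = z^3 * z^2" by (simp_all add: power_Suc2[symmetric] flip: power_add)
  define A where "A = y1 * cnj x1 * cnj z"
  define B where "B = y3 * cnj x3 * cnj (z^2)"
  have A1: "cmod A = 1" using un zmod by (simp add: A_def x1_def y1_def z_def norm_mult)
  have B1: "cmod B = 1" using un zmod by (simp add: B_def x3_def y3_def z_def norm_mult norm_power)
  have ey1: "y1 = x1 * z * A"
  proof -
    have "x1 * z * A = y1 * (cnj x1 * x1) * (cnj z * z)" by (simp add: A_def mult_ac)
    thus ?thesis using xc zc by simp
  qed
  have ey3: "y3 = x3 * z^2 * B"
  proof -
    have "x3 * z^2 * B = y3 * (cnj x3 * x3) * (cnj z * z)^2" by (simp add: B_def mult_ac power2_eq_square)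
    thus ?thesis using xc zc by simp
  qed
  have ey2: "y2 = x2 * z^4 * A"
  proof -
    have "cnj x1 * x2 = - cnj y1 * y2" using rel(1) by (simp add: x1_def x2_def y1_def y2_def add_eq_0_iff)
    hence "y1 * (cnj x1 * x2) = - (cnj y1 * y1) * y2" by (simp add: mult_ac)
    hence "y2 = - y1 * cnj x1 * x2" using xc by (simp add: mult_ac)
    also have "... = x2 * z^3 * (y1 * cnj x1 * (cnj z * z))" using z3' zc by simp
    also have "... = x2 * z^4 * A" unfolding z4e by (simp add: A_def mult_ac)
    finally show ?thesis .
  qed
  have ey4: "y4 = x4 * z^5 * B"
  proof -
    have "cnj x3 * x4 = - cnj y3 * y4" using rel(2) by (simp add: x3_def x4_def y3_def y4_def add_eq_0_iff)
    hence "y3 * (cnj x3 * x4) = - (cnj y3 * y3) * y4" by (simp add: mult_ac)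
    hence "y4 = - y3 * cnj x3 * x4" using xc by (simp add: mult_ac)
    also have "... = x4 * z^3 * (y3 * cnj x3 * (cnj z * z)^2)" using z3' zc by simp
    also have "... = x4 * z^5 * B" unfolding z4e by (simp add: B_def mult_ac power2_eq_square)
    finally show ?thesis .
  qed
  have zr: "\<And>n. n \<ge> 6 \<Longrightarrow> z ^ n = z ^ (n - 6)" using zpow_red by (simp add: z_def)
  note cpd = cp[unfolded colpat_def]
  have eA: "exp (\<i> * complex_of_real (Arg A)) = A" by (rule unit_exp[OF A1])
  have eB: "exp (\<i> * complex_of_real (Arg B)) = B" by (rule unit_exp[OF B1])
  define q1 where "q1 = [s0,r0,s1,r1,s2,r2]"
  define q2 where "q2 = [a,w1,w3,b,w2,w4]"
  define v where "v = [1,x1,x3,c,x2,x4]"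
  have bq1: "bij_betw (nth q1) {..<6} {..<6}" using dq1 unfolding q1_def by (intro bij_betw_nth) auto
  have bq2: "bij_betw (nth q2) {..<6} {..<6}" using dq2 unfolding q2_def by (intro bij_betw_nth) auto
  have q1r: "\<forall>i<6. q1 ! i < 6" "\<forall>i<6. q2 ! i < 6" using bq1 bq2 by (auto dest: bij_betwE)
  have main: "\<forall>i<6. \<forall>l<6. G (q1 ! i) (q2 ! l) = F6R (Arg A) (Arg B) i l * v ! l"
  proof -
    have g: "G s0 w1 = x1" "G r0 w1 = x1 * omega6 * A" "G s0 w2 = x2" "G r0 w2 = x2 * omega6^4 * A"
      "G s0 w3 = x3" "G r0 w3 = x3 * omega6^2 * B" "G s0 w4 = x4" "G r0 w4 = x4 * omega6^5 * B"
      using ey1 ey2 ey3 ey4 by (simp_all add: x1_def x2_def x3_def x4_def y1_def y2_def y3_def y4_def z_def)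
    note cpd' = cpd[unfolded g]
    have ga: "G s0 a = 1" "G s1 a = 1" "G s2 a = 1" "G r0 a = 1" "G r1 a = 1" "G r2 a = 1"
      using Ga dq1 by auto
    show ?thesis
    unfolding all6
    apply (simp add: q1_def q2_def v_def F6R_def F6_def Rmat_def eA eB g cpd' ga Gb)
    apply (simp add: zpow_red z3 z6 power_Suc[symmetric])
    done
  qed
  show ?thesis
  proof (rule exI, rule exI, rule equiv_from_bij[OF bq1 bq2])
    show "\<forall>i<6. cmod (H (q1 ! i) a) = 1" using Ha q1r by auto
    show "\<forall>l<6. cmod (v ! l) = 1" unfolding all6 using un c1 by (simp add: v_def x1_def x2_def x3_def x4_def)
    show "\<forall>i<6. \<forall>l<6. H (q1 ! i) (q2 ! l) = H (q1 ! i) a * F6R (Arg A) (Arg B) i l * v ! l"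
      using main HG q1r by (simp add: mult.assoc)
  qed
qed


lemma pick_p:
  assumes "(u = x*omega6^2 \<and> v = x*omega6^4) \<or> (u = x*omega6^4 \<and> v = x*omega6^2)"
  shows "\<exists>p\<in>{omega6^2, omega6^4}. u = x*p \<and> v = x*p^2"
proof -
  have z8: "(omega6^4)^2 = omega6^2" "(omega6^2)^2 = omega6^4" using zpow_red[of 8]
    by (simp_all flip: power_mult)
  from assms show ?thesis
  proof
    assume "u = x*omega6^2 \<and> v = x*omega6^4" thus ?thesis using z8 by auto
  next
    assume "u = x*omega6^4 \<and> v = x*omega6^2" thus ?thesis using z8 by auto
  qed
qed

lemma colex:
  assumes "cmod x = 1" "cmod (G s1 w) = 1" "cmod (G s2 w) = 1" "x = G s0 w"
    "cmod y = 1" "cmod (G r1 w) = 1" "cmod (G r2 w) = 1" "y = G r0 w"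
    "G s0 w + G s1 w + G s2 w = 0" "G r0 w + G r1 w + G r2 w = 0"
  shows "\<exists>p q. p \<in> {omega6^2, omega6^4} \<and> q \<in> {omega6^2, omega6^4} \<and> colpat G s0 s1 s2 r0 r1 r2 w p q"
proof -
  have z8: "(omega6^4)^2 = omega6^2" "(omega6^2)^2 = omega6^4" using zpow_red[of 8]
    by (simp_all flip: power_mult)
  have t: "(G s1 w = x*omega6^2 \<and> G s2 w = x*omega6^4) \<or> (G s1 w = x*omega6^4 \<and> G s2 w = x*omega6^2)"
    using three_unit[of x "G s1 w" "G s2 w"] assms by simp
  have b: "(G r1 w = y*omega6^2 \<and> G r2 w = y*omega6^4) \<or> (G r1 w = y*omega6^4 \<and> G r2 w = y*omega6^2)"
    using three_unit[of y "G r1 w" "G r2 w"] assms by simp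
  have t': "\<exists>p\<in>{omega6^2, omega6^4}. G s1 w = x*p \<and> G s2 w = x*p^2" using t by (rule pick_p)
  have b': "\<exists>p\<in>{omega6^2, omega6^4}. G r1 w = y*p \<and> G r2 w = y*p^2" using b by (rule pick_p)
  from t' b' show ?thesis unfolding colpat_def assms(4,8)[symmetric] by blast
qed

lemma colpat_swap:
  assumes "colpat G s0 s1 s2 r0 r1 r2 w p q" "q \<in> {omega6^2, omega6^4}"
  shows "colpat G s0 s1 s2 r0 r2 r1 w p (if q = omega6^2 then omega6^4 else omega6^2)"
proof -
  have z8: "(omega6^4)^2 = omega6^2" "(omega6^2)^2 = omega6^4" using zpow_red[of 8]
    by (simp_all flip: power_mult)
  show ?thesis using assms z8 z24ne unfolding colpat_def by auto
qed

lemma twogroupsA: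
  assumes dq1: "distinct [s0,r0,s1,r1,s2,r2]" "set [s0,r0,s1,r1,s2,r2] = {..<6}"
    and dq2: "distinct [a,w1,w3,b,w2,w4]" "set [a,w1,w3,b,w2,w4] = {..<6}"
    and HG: "\<forall>j<6. \<forall>k<6. H j k = H j a * G j k" and Ha: "\<forall>j<6. cmod (H j a) = 1"
    and Ga: "\<forall>j<6. G j a = 1"
    and Gb: "G s0 b = c" "G s1 b = c" "G s2 b = c" "G r0 b = - c" "G r1 b = - c" "G r2 b = - c"
    and c1: "cmod c = 1"
    and cp: "colpat G s0 s1 s2 r0 r1 r2 w1 (omega6^2) q1" "colpat G s0 s1 s2 r0 r1 r2 w2 (omega6^2) q1"
      "colpat G s0 s1 s2 r0 r1 r2 w3 (omega6^4) q2" "colpat G s0 s1 s2 r0 r1 r2 w4 (omega6^4) q2"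
    and q: "q1 \<in> {omega6^2, omega6^4}" "q2 \<in> {omega6^2, omega6^4}" "q1 \<noteq> q2"
    and un: "cmod (G s0 w1) = 1" "cmod (G s0 w2) = 1" "cmod (G s0 w3) = 1" "cmod (G s0 w4) = 1"
      "cmod (G r0 w1) = 1" "cmod (G r0 w2) = 1" "cmod (G r0 w3) = 1" "cmod (G r0 w4) = 1"
    and rel: "cnj (G s0 w1) * G s0 w2 + cnj (G r0 w1) * G r0 w2 = 0"
      "cnj (G s0 w3) * G s0 w4 + cnj (G r0 w3) * G r0 w4 = 0"
  shows "\<exists>\<alpha> \<beta>. equiv6 (F6R \<alpha> \<beta>) H"
proof (cases "q1 = omega6^2")
  case True
  hence "q2 = omega6^4" using q by auto
  with True show ?thesis using assemble[OF dq1 dq2 HG Ha Ga Gb c1 _ _ _ _ un rel] cp by simp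
next
  case False
  hence q1: "q1 = omega6^4" and q2: "q2 = omega6^2" using q by auto
  have cp': "colpat G s0 s1 s2 r0 r2 r1 w1 (omega6^2) (omega6^2)" "colpat G s0 s1 s2 r0 r2 r1 w2 (omega6^2) (omega6^2)"
      "colpat G s0 s1 s2 r0 r2 r1 w3 (omega6^4) (omega6^4)" "colpat G s0 s1 s2 r0 r2 r1 w4 (omega6^4) (omega6^4)"
    using colpat_swap[OF cp(1)] colpat_swap[OF cp(2)] colpat_swap[OF cp(3)] colpat_swap[OF cp(4)] q1 q2 z24ne
    by auto
  have dq1': "distinct [s0,r0,s1,r2,s2,r1]" "set [s0,r0,s1,r2,s2,r1] = {..<6}" using dq1 by auto
  show ?thesis using assemble[OF dq1' dq2 HG Ha Ga Gb(1,2,3,4,6,5) c1 cp' un rel] .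
qed

lemma twogroups:
  assumes dq1: "distinct [s0,r0,s1,r1,s2,r2]" "set [s0,r0,s1,r1,s2,r2] = {..<6}"
    and dq2: "distinct [a,b,w1,w2,w3,w4]" "set [a,b,w1,w2,w3,w4] = {..<6}"
    and HG: "\<forall>j<6. \<forall>k<6. H j k = H j a * G j k" and Ha: "\<forall>j<6. cmod (H j a) = 1"
    and Ga: "\<forall>j<6. G j a = 1"
    and Gb: "G s0 b = c" "G s1 b = c" "G s2 b = c" "G r0 b = - c" "G r1 b = - c" "G r2 b = - c"
    and c1: "cmod c = 1"
    and cp: "colpat G s0 s1 s2 r0 r1 r2 w1 p1 q1" "colpat G s0 s1 s2 r0 r1 r2 w2 p1 q1"
      "colpat G s0 s1 s2 r0 r1 r2 w3 p2 q2" "colpat G s0 s1 s2 r0 r1 r2 w4 p2 q2"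
    and p: "p1 \<in> {omega6^2, omega6^4}" "p2 \<in> {omega6^2, omega6^4}" "p1 \<noteq> p2"
    and q: "q1 \<in> {omega6^2, omega6^4}" "q2 \<in> {omega6^2, omega6^4}" "q1 \<noteq> q2"
    and un: "cmod (G s0 w1) = 1" "cmod (G s0 w2) = 1" "cmod (G s0 w3) = 1" "cmod (G s0 w4) = 1"
      "cmod (G r0 w1) = 1" "cmod (G r0 w2) = 1" "cmod (G r0 w3) = 1" "cmod (G r0 w4) = 1"
    and rel: "cnj (G s0 w1) * G s0 w2 + cnj (G r0 w1) * G r0 w2 = 0"
      "cnj (G s0 w3) * G s0 w4 + cnj (G r0 w3) * G r0 w4 = 0"
  shows "\<exists>\<alpha> \<beta>. equiv6 (F6R \<alpha> \<beta>) H"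
proof (cases "p1 = omega6^2")
  case True
  hence "p2 = omega6^4" using p by auto
  have dq2': "distinct [a,w1,w3,b,w2,w4]" "set [a,w1,w3,b,w2,w4] = {..<6}" using dq2 by auto
  show ?thesis using twogroupsA[OF dq1 dq2' HG Ha Ga Gb c1 _ _ _ _ q un rel] cp True \<open>p2 = omega6^4\<close> by simp
next
  case False
  hence "p1 = omega6^4" "p2 = omega6^2" using p by auto
  have dq2': "distinct [a,w3,w1,b,w4,w2]" "set [a,w3,w1,b,w4,w2] = {..<6}" using dq2 by auto
  have q': "q2 \<in> {omega6^2, omega6^4}" "q1 \<in> {omega6^2, omega6^4}" "q2 \<noteq> q1" using q by auto
  show ?thesis using twogroupsA[OF dq1 dq2' HG Ha Ga Gb c1 _ _ _ _ q' un(3,4,1,2,7,8,5,6) rel(2,1)] cp \<open>p1 = omega6^4\<close> \<open>p2 = omega6^2\<close> by simp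
qed


lemma core:
  assumes hH: "hadamard6 H" and ab: "a < 6" "b < 6" "a \<noteq> b"
    and he: "\<forall>j<6. H j b = c * e j * H j a" "\<forall>j<6. e j \<in> {1, -1}"
  shows "\<exists>\<alpha> \<beta>. equiv6 (F6R \<alpha> \<beta>) H"
proof -
  have Hu: "\<And>j k. j < 6 \<Longrightarrow> k < 6 \<Longrightarrow> cmod (H j k) = 1" using hH by (simp add: hadamard6_def)
  have Ho: "\<And>k l. k < 6 \<Longrightarrow> l < 6 \<Longrightarrow> k \<noteq> l \<Longrightarrow> (\<Sum>j<6. cnj (H j k) * H j l) = 0"
    using hH by (simp add: hadamard6_def)
  have hc: "\<And>j. j < 6 \<Longrightarrow> cnj (H j a) * H j a = 1"
    using Hu ab by (metis complex_norm_square mult.commute of_real_1 power_one complex_mult_cnj)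
  define G where "G j k = cnj (H j a) * H j k" for j k
  have HG: "\<forall>j<6. \<forall>k<6. H j k = H j a * G j k"
    using hc by (auto simp: G_def mult.assoc[symmetric] mult.commute[of "H _ a"])
  have Gu: "\<And>j k. j < 6 \<Longrightarrow> k < 6 \<Longrightarrow> cmod (G j k) = 1" using Hu ab by (simp add: G_def norm_mult)
  have Ga: "\<forall>j<6. G j a = 1" using hc by (simp add: G_def)
  have Gbe: "\<And>j. j < 6 \<Longrightarrow> G j b = c * e j"
    using hc he(1) by (simp add: G_def)
  have e1: "\<And>j. j < 6 \<Longrightarrow> cmod (e j) = 1" using he(2) by auto
  have c1: "cmod c = 1" using Hu[of 0 b] Hu[of 0 a] he(1) e1[of 0] ab by (simp add: norm_mult)
  have oG: "\<And>k l. k < 6 \<Longrightarrow> l < 6 \<Longrightarrow> k \<noteq> l \<Longrightarrow> (\<Sum>j<6. cnj (G j k) * G j l) = 0"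
  proof -
    fix k l :: nat assume kl: "k < 6" "l < 6" "k \<noteq> l"
    have "(\<Sum>j<6. cnj (G j k) * G j l) = (\<Sum>j<6. cnj (H j k) * H j l)"
    proof (rule sum.cong)
      fix j assume "j \<in> {..<6::nat}"
      hence "cnj (H j a) * H j a = 1" using hc by simp
      thus "cnj (G j k) * G j l = cnj (H j k) * H j l"
        by (simp add: G_def) (metis (no_types, lifting) mult.assoc mult.commute mult_1_left)
    qed simp
    thus "(\<Sum>j<6. cnj (G j k) * G j l) = 0" using Ho kl by simp
  qed
  have sume: "(\<Sum>j<6. e j) = 0"
  proof -
    have "(\<Sum>j<6. cnj (G j a) * G j b) = (\<Sum>j<6. c * e j)" using Ga Gbe by simp
    also have "... = c * (\<Sum>j<6. e j)" by (simp add: sum_distrib_left)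
    finally show ?thesis using oG[OF ab] c1 by auto
  qed
  define S where "S = {j. j < 6 \<and> e j = 1}"
  define R where "R = {j. j < 6 \<and> e j = -1}"
  have SR: "S \<union> R = {..<6}" "S \<inter> R = {}" "finite S" "finite R" using he(2) by (auto simp: S_def R_def)
  have "(\<Sum>j<6. e j) = sum e S + sum e R" using SR by (metis sum.union_disjoint)
  also have "sum e S = of_nat (card S)" by (simp add: S_def)
  also have "sum e R = - of_nat (card R)" by (simp add: R_def)
  finally have "of_nat (card S) = (of_nat (card R) :: complex)" using sume by simp
  hence cSR: "card S = card R" using of_nat_eq_iff by blast
  have "card S + card R = 6" using SR card_Un_disjoint by (metis card_lessThan)
  hence c3: "card S = 3" "card R = 3" using cSR by auto
  obtain s0 s1 s2 where S3: "S = {s0,s1,s2}" "s0 \<noteq> s1" "s1 \<noteq> s2" "s0 \<noteq> s2" using c3(1) card_3_iff by metis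
  obtain r0 r1 r2 where R3: "R = {r0,r1,r2}" "r0 \<noteq> r1" "r1 \<noteq> r2" "r0 \<noteq> r2" using c3(2) card_3_iff by metis
  have dq1: "distinct [s0,r0,s1,r1,s2,r2]" "set [s0,r0,s1,r1,s2,r2] = {..<6}"
    using S3 R3 SR(1,2) by auto
  have dq1b: "distinct [s0,s1,s2,r0,r1,r2]" "set [s0,s1,s2,r0,r1,r2] = {..<6}" using dq1 by auto
  have es: "e s0 = 1" "e s1 = 1" "e s2 = 1" "e r0 = -1" "e r1 = -1" "e r2 = -1"
    "s0 < 6" "s1 < 6" "s2 < 6" "r0 < 6" "r1 < 6" "r2 < 6"
    using S3(1) R3(1) by (auto simp: S_def R_def set_eq_iff)
  have Gb: "G s0 b = c" "G s1 b = c" "G s2 b = c" "G r0 b = - c" "G r1 b = - c" "G r2 b = - c"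
    using Gbe es by auto
  have ga6: "G s0 a = 1" "G s1 a = 1" "G s2 a = 1" "G r0 a = 1" "G r1 a = 1" "G r2 a = 1"
    using Ga es by auto
  have tb: "G s0 w + G s1 w + G s2 w = 0 \<and> G r0 w + G r1 w + G r2 w = 0" if w: "w < 6" "w \<noteq> a" "w \<noteq> b" for w
  proof -
    have "0 = (\<Sum>j<6. cnj (G j a) * G j w)" using oG[OF ab(1) w(1)] w(2) by metis
    also have "... = cnj (G s0 a) * G s0 w + cnj (G s1 a) * G s1 w + cnj (G s2 a) * G s2 w +
       cnj (G r0 a) * G r0 w + cnj (G r1 a) * G r1 w + cnj (G r2 a) * G r2 w" by (rule sum6[OF dq1b])
    finally have A: "G s0 w + G s1 w + G s2 w + G r0 w + G r1 w + G r2 w = 0" unfolding ga6 by simp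
    have "0 = (\<Sum>j<6. cnj (G j b) * G j w)" using oG[OF ab(2) w(1)] w(3) by metis
    also have "... = cnj (G s0 b) * G s0 w + cnj (G s1 b) * G s1 w + cnj (G s2 b) * G s2 w +
       cnj (G r0 b) * G r0 w + cnj (G r1 b) * G r1 w + cnj (G r2 b) * G r2 w" by (rule sum6[OF dq1b])
    also have "... = cnj c * ((G s0 w + G s1 w + G s2 w) - (G r0 w + G r1 w + G r2 w))"
      unfolding Gb by (simp add: algebra_simps)
    finally have "cnj c * ((G s0 w + G s1 w + G s2 w) - (G r0 w + G r1 w + G r2 w)) = 0" by simp
    moreover have "cnj c \<noteq> 0" using c1 by auto
    ultimately have B: "G s0 w + G s1 w + G s2 w = G r0 w + G r1 w + G r2 w" by simp
    have "2 * (G s0 w + G s1 w + G s2 w) = 0" using A B by (simp add: algebra_simps)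
    hence "G s0 w + G s1 w + G s2 w = 0" by (metis mult_eq_0_iff zero_neq_numeral)
    thus ?thesis using B by simp
  qed
  define Z where "Z = {omega6^2, omega6^4}"
  have CE: "\<exists>p q. p \<in> Z \<and> q \<in> Z \<and> colpat G s0 s1 s2 r0 r1 r2 w p q" if w: "w < 6" "w \<noteq> a" "w \<noteq> b" for w
    unfolding Z_def using tb[OF w] es w
    by (intro colex[where x="G s0 w" and y="G r0 w"]) (auto intro: Gu)
  have PO: "(p = p' \<longleftrightarrow> q = q') \<and> (p = p' \<longrightarrow> cnj (G s0 w) * G s0 w' + cnj (G r0 w) * G r0 w' = 0)"
    if "w < 6" "w' < 6" "w \<noteq> w'" "colpat G s0 s1 s2 r0 r1 r2 w p q" "colpat G s0 s1 s2 r0 r1 r2 w' p' q'"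
      "p \<in> Z" "q \<in> Z" "p' \<in> Z" "q' \<in> Z" for w w' p q p' q'
  proof -
    have "0 = (\<Sum>j<6. cnj (G j w) * G j w')" using oG that(1-3) by metis
    also have "... = cnj (G s0 w) * G s0 w' + cnj (G s1 w) * G s1 w' + cnj (G s2 w) * G s2 w' +
       cnj (G r0 w) * G r0 w' + cnj (G r1 w) * G r1 w' + cnj (G r2 w) * G r2 w'" by (rule sum6[OF dq1b])
    finally show ?thesis using pair_orth[OF that(4,5) that(6-9)[unfolded Z_def]] Gu es that(1,2) by metis
  qed
  have NT: False if "w1 < 6" "w2 < 6" "w3 < 6" "w1 \<noteq> w2" "w1 \<noteq> w3" "w2 \<noteq> w3"
      "colpat G s0 s1 s2 r0 r1 r2 w1 p q1" "colpat G s0 s1 s2 r0 r1 r2 w2 p q2" "colpat G s0 s1 s2 r0 r1 r2 w3 p q3"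
      "p \<in> Z" "q1 \<in> Z" "q2 \<in> Z" "q3 \<in> Z" for w1 w2 w3 p q1 q2 q3
    using no_three[of "G s0 w1" "G s0 w2" "G s0 w3" "G r0 w1" "G r0 w2" "G r0 w3"]
      PO[OF that(1,2,4,7,8,10,11,10,12)] PO[OF that(1,3,5,7,9,10,11,10,13)] PO[OF that(2,3,6,8,9,10,12,10,13)]
      Gu es that(1-3) by metis
  have TG: "\<exists>\<alpha> \<beta>. equiv6 (F6R \<alpha> \<beta>) H"
    if "distinct [a,b,w1,w2,w3,w4]" "set [a,b,w1,w2,w3,w4] = {..<6}"
      "colpat G s0 s1 s2 r0 r1 r2 w1 P1 Q1" "colpat G s0 s1 s2 r0 r1 r2 w2 P1 Q1'"
      "colpat G s0 s1 s2 r0 r1 r2 w3 P2 Q2" "colpat G s0 s1 s2 r0 r1 r2 w4 P2 Q2'"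
      "P1 \<in> Z" "P2 \<in> Z" "P1 \<noteq> P2" "Q1 \<in> Z" "Q1' \<in> Z" "Q2 \<in> Z" "Q2' \<in> Z"
    for w1 w2 w3 w4 P1 P2 Q1 Q1' Q2 Q2'
  proof -
    have lt: "w1 < 6" "w2 < 6" "w3 < 6" "w4 < 6" using that(2) by auto
    have ne: "w1 \<noteq> w2" "w3 \<noteq> w4" "w1 \<noteq> w3" using that(1) by auto
    have p12: "Q1 = Q1'" "cnj (G s0 w1) * G s0 w2 + cnj (G r0 w1) * G r0 w2 = 0"
      using PO[OF lt(1,2) ne(1) that(3,4,7,10,7,11)] by auto
    have p34: "Q2 = Q2'" "cnj (G s0 w3) * G s0 w4 + cnj (G r0 w3) * G r0 w4 = 0"
      using PO[OF lt(3,4) ne(2) that(5,6,8,12,8,13)] by auto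
    have p13: "Q1 \<noteq> Q2" using PO[OF lt(1,3) ne(3) that(3,5,7,10,8,12)] that(9) by auto
    show ?thesis
      apply (rule twogroups[OF dq1 that(1,2) HG _ Ga Gb _ that(3) _ that(5) _ _ _ that(9) _ _ p13 _ _ _ _ _ _ _ _ p12(2) p34(2)])
      using that(4,6,7,8,10,12) p12(1) p34(1) Hu ab c1 Gu es lt unfolding Z_def by auto
  qed
  define Oc where "Oc = {..<6::nat} - {a,b}"
  have cO: "card Oc = 4" using ab by (simp add: Oc_def card_Diff_subset)
  define L where "L = sorted_list_of_set Oc"
  have L: "distinct L" "set L = Oc" "length L = 4" using cO by (simp_all add: L_def Oc_def)
  obtain c0 c1 c2 c3 where Lc: "L = [c0,c1,c2,c3]"
    using L(3) by (auto simp: numeral_eq_Suc length_Suc_conv)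
  have dq2: "distinct [a,b,c0,c1,c2,c3]" "set [a,b,c0,c1,c2,c3] = {..<6}"
    using L(1,2) ab unfolding Lc Oc_def by auto
  have cc: "c0 < 6" "c0 \<noteq> a" "c0 \<noteq> b" "c1 < 6" "c1 \<noteq> a" "c1 \<noteq> b"
     "c2 < 6" "c2 \<noteq> a" "c2 \<noteq> b" "c3 < 6" "c3 \<noteq> a" "c3 \<noteq> b"
     "c0 \<noteq> c1" "c0 \<noteq> c2" "c0 \<noteq> c3" "c1 \<noteq> c2" "c1 \<noteq> c3" "c2 \<noteq> c3"
    using dq2 by auto
  obtain p0 q0 where P0: "p0 \<in> Z" "q0 \<in> Z" "colpat G s0 s1 s2 r0 r1 r2 c0 p0 q0" using CE cc by blast
  obtain p1 q1 where P1: "p1 \<in> Z" "q1 \<in> Z" "colpat G s0 s1 s2 r0 r1 r2 c1 p1 q1" using CE cc by blast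
  obtain p2 q2 where P2: "p2 \<in> Z" "q2 \<in> Z" "colpat G s0 s1 s2 r0 r1 r2 c2 p2 q2" using CE cc by blast
  obtain p3 q3 where P3: "p3 \<in> Z" "q3 \<in> Z" "colpat G s0 s1 s2 r0 r1 r2 c3 p3 q3" using CE cc by blast
  have two: "\<And>u v w. u \<in> Z \<Longrightarrow> v \<in> Z \<Longrightarrow> w \<in> Z \<Longrightarrow> u \<noteq> w \<Longrightarrow> v \<noteq> w \<Longrightarrow> u = v"
    unfolding Z_def by auto
  show ?thesis
  proof (cases "p0 = p1")
    case True
    have "p2 \<noteq> p0" using NT[OF cc(1,4,7,13,14,16) P0(3) _ _ P0(1,2) P1(2) P2(2)] P1(3) P2(3) True by metis
    moreover have "p3 \<noteq> p0" using NT[OF cc(1,4,10,13,15,17) P0(3) _ _ P0(1,2) P1(2) P3(2)] P1(3) P3(3) True by metis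
    ultimately have "p2 = p3" using two P0 P2 P3 by metis
    thus ?thesis using TG[OF dq2 P0(3) _ P2(3) _ P0(1) P2(1) _ P0(2) P1(2) P2(2) P3(2)] P1(3) P3(3) True
      \<open>p2 \<noteq> p0\<close> by metis
  next
    case False
    show ?thesis
    proof (cases "p0 = p2")
      case True
      have "p3 \<noteq> p0" using NT[OF cc(1,7,10,14,15,18) P0(3) _ _ P0(1,2) P2(2) P3(2)] P2(3) P3(3) True by metis
      hence "p1 = p3" using two P0 P1 P3 False by metis
      have d: "distinct [a,b,c0,c2,c1,c3]" "set [a,b,c0,c2,c1,c3] = {..<6}" using dq2 by auto
      show ?thesis using TG[OF d P0(3) _ P1(3) _ P0(1) P1(1) False P0(2) P2(2) P1(2) P3(2)] P2(3) P3(3) True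
        \<open>p1 = p3\<close> by metis
    next
      case False2: False
      have "p1 = p2" using two P0 P1 P2 False False2 by metis
      have "p3 \<noteq> p1" using NT[OF cc(4,7,10,16,17,18) P1(3) _ _ P1(1,2) P2(2) P3(2)] P2(3) P3(3) \<open>p1 = p2\<close> by metis
      hence "p3 = p0" using two P0 P1 P3 False by metis
      have d: "distinct [a,b,c0,c3,c1,c2]" "set [a,b,c0,c3,c1,c2] = {..<6}" using dq2 by auto
      show ?thesis using TG[OF d P0(3) _ P1(3) _ P0(1) P1(1) False P0(2) P3(2) P1(2) P2(2)] P2(3) P3(3)
        \<open>p1 = p2\<close> \<open>p3 = p0\<close> by metis
    qed
  qed
qed


definition tr :: "cmat \<Rightarrow> cmat" where "tr H = (\<lambda>j k. H k j)"

definition dform :: "cmat \<Rightarrow> cmat" where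
  "dform H = (\<lambda>j k. if j < 6 \<and> k < 6 then H j k * H 0 0 / (H j 0 * H 0 k) else 0)"

lemma unit_nz: "cmod z = 1 \<Longrightarrow> z \<noteq> 0" by auto

lemma unit_ne: "\<forall>j<6. \<forall>k<6. cmod (H j k) = 1 \<Longrightarrow> j < 6 \<Longrightarrow> k < 6 \<Longrightarrow> H j k \<noteq> 0"
  by (metis norm_zero zero_neq_one)

lemma dephased_eq:
  assumes Hu: "\<forall>j<6. \<forall>k<6. cmod (H j k) = 1"
  shows "dephased H = dform H"
  unfolding dephased_def
proof (rule the_equality)
  have nz: "\<And>j k. j < 6 \<Longrightarrow> k < 6 \<Longrightarrow> H j k \<noteq> 0" using Hu by (metis norm_zero zero_neq_one)
  show "(\<exists>d1 d2 :: nat \<Rightarrow> complex.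
        (\<forall>j<6. cmod (d1 j) = 1) \<and> (\<forall>k<6. cmod (d2 k) = 1) \<and>
        (\<forall>j<6. \<forall>k<6. dform H j k = d1 j * H j k * d2 k)) \<and>
     (\<forall>k<6. dform H 0 k = 1) \<and> (\<forall>j<6. dform H j 0 = 1) \<and>
     (\<forall>j k. \<not> (j < 6 \<and> k < 6) \<longrightarrow> dform H j k = 0)"
  proof (intro conjI)
    show "\<exists>d1 d2 :: nat \<Rightarrow> complex.
        (\<forall>j<6. cmod (d1 j) = 1) \<and> (\<forall>k<6. cmod (d2 k) = 1) \<and>
        (\<forall>j<6. \<forall>k<6. dform H j k = d1 j * H j k * d2 k)"
      apply (rule exI[of _ "\<lambda>j. H 0 0 / H j 0"], rule exI[of _ "\<lambda>k. 1 / H 0 k"])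
      using Hu by (auto simp: dform_def norm_divide)
  qed (use nz in \<open>simp_all add: dform_def\<close>)
next
  fix M assume M: "(\<exists>d1 d2 :: nat \<Rightarrow> complex.
        (\<forall>j<6. cmod (d1 j) = 1) \<and> (\<forall>k<6. cmod (d2 k) = 1) \<and>
        (\<forall>j<6. \<forall>k<6. M j k = d1 j * H j k * d2 k)) \<and>
     (\<forall>k<6. M 0 k = 1) \<and> (\<forall>j<6. M j 0 = 1) \<and>
     (\<forall>j k. \<not> (j < 6 \<and> k < 6) \<longrightarrow> M j k = 0)"
  then obtain d1 d2 :: "nat \<Rightarrow> complex" where d: "\<forall>j<6. \<forall>k<6. M j k = d1 j * H j k * d2 k" by blast
  have M0: "\<forall>k<6. M 0 k = 1" "\<forall>j<6. M j 0 = 1" "\<forall>j k. \<not> (j < 6 \<and> k < 6) \<longrightarrow> M j k = 0" using M by blast+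
  show "M = dform H"
  proof (intro ext)
    fix j k
    show "M j k = dform H j k"
    proof (cases "j < 6 \<and> k < 6")
      case True
      have e1: "d1 j * H j 0 * d2 0 = 1" using M0(2) d True by (metis zero_less_numeral)
      have e2: "d1 0 * H 0 k * d2 k = 1" using M0(1) d True by (metis zero_less_numeral)
      have e3: "d1 0 * H 0 0 * d2 0 = 1" using M0(1) d True by (metis zero_less_numeral)
      have "d1 j * d2 k * (H j 0 * H 0 k) = d1 j * d2 k * (H j 0 * H 0 k) * (d1 0 * H 0 0 * d2 0)"
        using e3 by simp
      also have "... = H 0 0 * (d1 j * H j 0 * d2 0) * (d1 0 * H 0 k * d2 k)" by (simp add: mult_ac)
      finally have "d1 j * d2 k * (H j 0 * H 0 k) = H 0 0" using e1 e2 by simp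
      moreover have "H j 0 * H 0 k \<noteq> 0" using unit_ne[OF Hu] True by simp
      ultimately have "d1 j * d2 k = H 0 0 / (H j 0 * H 0 k)" by (simp add: field_simps)
      hence "d1 j * H j k * d2 k = H j k * (H 0 0 / (H j 0 * H 0 k))"
        by (metis mult.commute mult.left_commute)
      thus ?thesis using d True by (simp add: dform_def)
    next
      case False thus ?thesis using M0(3) unfolding dform_def by presburger
    qed
  qed
qed


lemma hadamard_unit: "hadamard6 H \<Longrightarrow> \<forall>j<6. \<forall>k<6. cmod (H j k) = 1"
  by (simp add: hadamard6_def)

lemma hadamard_tr:
  assumes hH: "hadamard6 H" shows "hadamard6 (tr H)"
proof -
  define A where "A = mat 6 6 (\<lambda>(i,j). cnj (H j i) / 6)"
  define B where "B = mat 6 6 (\<lambda>(i,j). H i j)"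
  have AB: "A * B = 1\<^sub>m 6"
  proof (rule eq_matI)
    fix i l assume il: "i < dim_row (1\<^sub>m 6 :: complex mat)" "l < dim_col (1\<^sub>m 6 :: complex mat)"
    hence il': "i < 6" "l < 6" by auto
    have "(A * B) $$ (i, l) = (\<Sum>j<6. cnj (H j i) * H j l) / 6"
      using il' by (simp add: A_def B_def scalar_prod_def lessThan_atLeast0 sum_divide_distrib)
    also have "... = 1\<^sub>m 6 $$ (i, l)"
    proof (cases "i = l")
      case True
      have "(\<Sum>j<6. cnj (H j i) * H j l) = (\<Sum>j<(6::nat). 1)"
        using True hH il' by (intro sum.cong) (auto simp: hadamard6_def complex_mult_cnj[symmetric] mult.commute[of "cnj _"] cmod_power2 complex_norm_square[symmetric])
      thus ?thesis using True il' by simp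
    next
      case False
      thus ?thesis using hH il' by (simp add: hadamard6_def)
    qed
    finally show "(A * B) $$ (i, l) = 1\<^sub>m 6 $$ (i, l)" .
  qed (simp_all add: A_def B_def)
  have BA: "B * A = 1\<^sub>m 6"
    by (rule mat_mult_left_right_inverse[OF _ _ AB]) (simp_all add: A_def B_def)
  show ?thesis unfolding hadamard6_def tr_def
  proof (intro conjI allI impI)
    fix j k assume "j < (6::nat)" "k < (6::nat)" thus "cmod (H k j) = 1" using hH by (simp add: hadamard6_def)
  next
    fix k l :: nat assume kl: "k < 6" "l < 6" "k \<noteq> l"
    have "(B * A) $$ (l, k) = 0" using BA kl by simp
    hence "(\<Sum>j<6. H l j * cnj (H k j)) / 6 = 0"
      using kl by (simp add: A_def B_def scalar_prod_def lessThan_atLeast0 sum_divide_distrib)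
    thus "(\<Sum>j<6. cnj (H k j) * H l j) = 0" by (simp add: mult.commute)
  qed
qed


lemma max_pairs:
  assumes "\<And>a b. Q a b \<Longrightarrow> a < (6::nat) \<and> b < 6"
  shows "Max {card P | P. P \<subseteq> {{a, b} | a b. Q a b} \<and> pairwise disjnt P} \<noteq> 0 \<longleftrightarrow> (\<exists>a b. Q a b)"
proof -
  define E where "E = {{a, b} | a b. Q a b}"
  define X where "X = {card P | P. P \<subseteq> E \<and> pairwise disjnt P}"
  have fE: "finite E"
  proof (rule finite_subset)
    show "E \<subseteq> Pow {..<6}" using assms by (auto simp: E_def)
  qed simp
  have fX: "finite X"
  proof (rule finite_subset)
    show "X \<subseteq> {..card E}" using fE by (auto simp: X_def intro: card_mono)
  qed simp
  have 0: "0 \<in> X" unfolding X_def by (rule CollectI, rule exI[of _ "{}"]) simp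
  show ?thesis unfolding E_def[symmetric] X_def[symmetric]
  proof
    assume "Max X \<noteq> 0"
    show "\<exists>a b. Q a b"
    proof (rule ccontr)
      assume "\<not> (\<exists>a b. Q a b)"
      hence "E = {}" by (auto simp: E_def)
      hence "X = {0}" by (auto simp: X_def)
      thus False using \<open>Max X \<noteq> 0\<close> by simp
    qed
  next
    assume "\<exists>a b. Q a b"
    then obtain a b where ab: "Q a b" by blast
    have "1 \<in> X" unfolding X_def
      by (rule CollectI, rule exI[of _ "{{a,b}}"]) (use ab in \<open>auto simp: E_def\<close>)
    hence "1 \<le> Max X" using fX by simp
    thus "Max X \<noteq> 0" by simp
  qed
qed

lemma eta_c_iff: "eta_c H \<noteq> 0 \<longleftrightarrow> (\<exists>a b. ER_cols (dephased H) a b)"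
  unfolding eta_c_def by (rule max_pairs) (simp add: ER_cols_def)

lemma eta_r_iff: "eta_r H \<noteq> 0 \<longleftrightarrow> (\<exists>a b. ER_rows (dephased H) a b)"
  unfolding eta_r_def by (rule max_pairs) (simp add: ER_rows_def)

lemma tr_tr[simp]: "tr (tr H) = H" by (simp add: tr_def)

lemma dform_tr: "dform (tr H) = tr (dform H)"
  by (auto simp: dform_def tr_def fun_eq_iff mult_ac)

lemma ER_rows_tr: "ER_rows M a b \<longleftrightarrow> ER_cols (tr M) a b"
  by (simp add: ER_rows_def ER_cols_def tr_def)

lemma tr_unit: "\<forall>j<6. \<forall>k<6. cmod (H j k) = 1 \<Longrightarrow> \<forall>j<6. \<forall>k<6. cmod (tr H j k) = 1"
  by (simp add: tr_def)

lemma rows_cols: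
  assumes "hadamard6 H"
  shows "(\<exists>a b. ER_rows (dephased H) a b) \<longleftrightarrow> (\<exists>a b. ER_cols (dephased (tr H)) a b)"
  using dephased_eq[OF hadamard_unit[OF assms]] dephased_eq[OF tr_unit[OF hadamard_unit[OF assms]]]
  by (simp add: dform_tr ER_rows_tr)

lemma equiv_tr: "equiv6 M H \<Longrightarrow> equiv6 (tr M) (tr H)"
proof -
  assume "equiv6 M H"
  then obtain d1 d2 p1 p2 where d: "\<forall>j<6. cmod (d1 j) = 1" "\<forall>k<6. cmod (d2 k) = 1"
    "bij_betw p1 {..<6} {..<6}" "bij_betw p2 {..<6} {..<6}"
    "\<forall>j<6. \<forall>k<6. H j k = d1 j * M (p1 j) (p2 k) * d2 k"
    unfolding equiv6_def by blast
  have "\<forall>j<6. \<forall>k<6. tr H j k = d2 j * tr M (p2 j) (p1 k) * d1 k"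
    using d(5) by (simp add: tr_def mult_ac)
  thus ?thesis unfolding equiv6_def using d(1-4) by blast
qed

lemma F6_sym: "F6 k j = F6 j k"
  unfolding F6_def by (simp add: mult.commute[of k j] conj_commute)

lemma tr_F6R: "tr (F6R a b) = F6Rt a b"
  unfolding tr_def F6R_def F6Rt_def by (simp add: F6_sym)

lemma tr_F6Rt: "tr (F6Rt a b) = F6R a b"
  by (metis tr_F6R tr_tr)

lemma er_to_core:
  assumes hH: "hadamard6 H" and er: "ER_cols (dephased H) a b"
  shows "\<exists>\<alpha> \<beta>. equiv6 (F6R \<alpha> \<beta>) H"
proof -
  have Hu: "\<forall>j<6. \<forall>k<6. cmod (H j k) = 1" using hH by (rule hadamard_unit)
  have ab: "a < 6" "b < 6" "a \<noteq> b" using er by (auto simp: ER_cols_def)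
  define e where "e j = cnj (dform H j a) * dform H j b" for j
  have eE: "\<forall>j<6. e j \<in> {1, -1}" using er unfolding dephased_eq[OF Hu] by (simp add: ER_cols_def e_def)
  have "\<forall>j<6. H j b = H 0 b / H 0 a * e j * H j a"
  proof (intro allI impI)
    fix j :: nat assume j: "j < 6"
    have nz: "H j a \<noteq> 0" "H j b \<noteq> 0" "H 0 a \<noteq> 0" "H 0 b \<noteq> 0" "H j 0 \<noteq> 0" "H 0 0 \<noteq> 0"
      using unit_ne[OF Hu] j ab by auto
    have ca: "cnj (H j a) = 1 / H j a" "cnj (H 0 a) = 1 / H 0 a" "cnj (H j 0) = 1 / H j 0" "cnj (H 0 0) = 1 / H 0 0"
      using cnj_unit Hu j ab by auto
    show "H j b = H 0 b / H 0 a * e j * H j a"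
      using nz j ab unfolding e_def dform_def by (simp add: ca field_simps)
  qed
  thus ?thesis using core[OF hH ab] eE by blast
qed

lemma F6R_col:
  assumes "i < 6" shows "F6R \<alpha> \<beta> i 0 = 1" "F6R \<alpha> \<beta> i 3 = (-1) ^ i"
proof -
  have "omega6^(i*3) = (-1)^i" by (simp only: mult.commute[of i] power_mult z3)
  thus "F6R \<alpha> \<beta> i 0 = 1" "F6R \<alpha> \<beta> i 3 = (-1) ^ i" using assms by (simp_all add: F6R_def F6_def Rmat_def)
qed

lemma fwd_cols:
  assumes hH: "hadamard6 H" and eq: "equiv6 (F6R \<alpha> \<beta>) H"
  shows "\<exists>a b. ER_cols (dephased H) a b"
proof -
  have Hu: "\<forall>j<6. \<forall>k<6. cmod (H j k) = 1" using hH by (rule hadamard_unit)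
  obtain d1 d2 p1 p2 where d: "\<forall>j<6. cmod (d1 j) = 1" "\<forall>k<6. cmod (d2 k) = 1"
    "bij_betw p1 {..<6} {..<6}" "bij_betw p2 {..<6} {..<6}"
    "\<forall>j<6. \<forall>k<6. H j k = d1 j * F6R \<alpha> \<beta> (p1 j) (p2 k) * d2 k"
    using eq unfolding equiv6_def by blast
  define k0 where "k0 = inv_into {..<6} p2 0"
  define k3 where "k3 = inv_into {..<6} p2 3"
  have k: "k0 < 6" "k3 < 6" "p2 k0 = 0" "p2 k3 = 3"
    using d(4) bij_betw_inv_into[OF d(4)] bij_betw_inv_into_right[OF d(4)]
    by (auto simp: k0_def k3_def dest: bij_betwE)
  have k03: "k0 \<noteq> k3" using k by auto
  have p1l: "\<And>j. j < 6 \<Longrightarrow> p1 j < 6" using d(3) by (auto dest: bij_betwE)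
  define s where "s j = ((-1) ^ p1 j :: complex)" for j
  have H0: "\<And>j. j < 6 \<Longrightarrow> H j k0 = d1 j * d2 k0" using d(5) k F6R_col p1l by simp
  have H3: "\<And>j. j < 6 \<Longrightarrow> H j k3 = d1 j * s j * d2 k3" using d(5) k F6R_col p1l by (simp add: s_def)
  have s2b: "\<And>j. s j \<in> {1, -1}" unfolding s_def by (case_tac "even (p1 j)") auto
  have s2a: "\<And>j. s j * s j = 1"
  proof -
    fix j show "s j * s j = 1" using s2b[of j] by auto
  qed
  note s2 = s2a s2b
  have ER: "ER_cols (dform H) k0 k3"
    unfolding ER_cols_def
  proof (intro conjI allI impI k k03)
    fix j :: nat assume j: "j < 6"
    have nz: "d1 j \<noteq> 0" "d2 k0 \<noteq> 0" "d2 k3 \<noteq> 0" "d1 0 \<noteq> 0" "H j 0 \<noteq> 0" "H 0 0 \<noteq> 0"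
      using d(1,2) j k unit_ne[OF Hu] by (metis norm_zero zero_neq_one zero_less_numeral)+
    have u: "cmod (dform H j k0) = 1" using Hu j k
      by (simp add: dform_def norm_mult norm_divide)
    have "dform H j k3 = s j * s 0 * dform H j k0"
    proof -
      have "dform H j k3 = d1 j * s j * d2 k3 * H 0 0 / (H j 0 * (d1 0 * s 0 * d2 k3))"
        using j k H3[OF j] H3[of 0] by (simp add: dform_def)
      also have "... = s j * s 0 * (d1 j * d2 k0 * H 0 0 / (H j 0 * (d1 0 * d2 k0)))"
        using nz s2b[of 0] by (auto simp: field_simps)
      also have "... = s j * s 0 * dform H j k0"
        using j k H0[OF j] H0[of 0] by (simp add: dform_def)
      finally show ?thesis .
    qed
    hence "cnj (dform H j k0) * dform H j k3 = s j * s 0 * (cnj (dform H j k0) * dform H j k0)"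
      by (simp add: mult_ac)
    also have "cnj (dform H j k0) * dform H j k0 = 1" using u
      by (metis complex_norm_square mult.commute of_real_1 power_one complex_mult_cnj)
    finally show "cnj (dform H j k0) * dform H j k3 \<in> {1, -1}" using s2(2)[of j] s2(2)[of 0] by auto
  qed
  thus ?thesis unfolding dephased_eq[OF Hu] by blast
qed

theorem proposition2:
  fixes H :: cmat
  assumes "hadamard6 H"
  shows "(\<exists>M. in_F6_2 M \<and> equiv6 M H) \<longleftrightarrow> (eta_c H \<noteq> 0 \<or> eta_r H \<noteq> 0)"
proof -
  have hT: "hadamard6 (tr H)" using assms by (rule hadamard_tr)
  show ?thesis unfolding eta_c_iff eta_r_iff rows_cols[OF assms]
  proof
    assume "\<exists>M. in_F6_2 M \<and> equiv6 M H"
    then obtain M \<alpha> \<beta> where M: "M = F6R \<alpha> \<beta> \<or> M = F6Rt \<alpha> \<beta>" "equiv6 M H" unfolding in_F6_2_def by blast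
    from M(1) show "(\<exists>a b. ER_cols (dephased H) a b) \<or> (\<exists>a b. ER_cols (dephased (tr H)) a b)"
    proof
      assume "M = F6R \<alpha> \<beta>" thus ?thesis using fwd_cols[OF assms] M(2) by blast
    next
      assume "M = F6Rt \<alpha> \<beta>"
      hence "equiv6 (F6R \<alpha> \<beta>) (tr H)" using equiv_tr[OF M(2)] tr_F6Rt by simp
      thus ?thesis using fwd_cols[OF hT] by blast
    qed
  next
    assume "(\<exists>a b. ER_cols (dephased H) a b) \<or> (\<exists>a b. ER_cols (dephased (tr H)) a b)"
    thus "\<exists>M. in_F6_2 M \<and> equiv6 M H"
    proof
      assume "\<exists>a b. ER_cols (dephased H) a b"
      then obtain \<alpha> \<beta> where "equiv6 (F6R \<alpha> \<beta>) H" using er_to_core[OF assms] by blast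
      thus ?thesis unfolding in_F6_2_def by blast
    next
      assume "\<exists>a b. ER_cols (dephased (tr H)) a b"
      then obtain \<alpha> \<beta> where "equiv6 (F6R \<alpha> \<beta>) (tr H)" using er_to_core[OF hT] by blast
      hence "equiv6 (F6Rt \<alpha> \<beta>) H" using equiv_tr tr_F6R by fastforce
      thus ?thesis unfolding in_F6_2_def by blast
    qed
  qed
qed
end
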